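(* If a subset $\mathcal S\subseteq\mathbb{R}^3$ generated by a pair of distinct lines is planar (contained in a plane), then $\mathcal S$ has a unique pair of generating lines. Moreover, letting $d$ be the distance between the two half planes that comprise $\mathcal S$, the generating lines are the two parallel lines in the $xy$-plane at distance $d/2$ from the projection of $\mathcal S$ to the $xy$-plane.
   Context: For distinct lines $L_1,L_2$ in the plane, the subset of $\mathbb{R}^3$ generated by them is the set of all points $(x,y,\pm z)$ such that $2z$ is the length of a line segment with one endpoint on $L_1$, the other on $L_2$, and midpoint $(x,y)$; $L_1,L_2$ are called a pair of generating lines for this set. *)

theory Defs
  imports "HOL-Analysis.Analysis"
begin

definition plane_line :: "(real \<times> real) set \<Rightarrow> bool" where
  "plane_line L \<longleftrightarrow> (\<exists>a v. v \<noteq> 0 \<and> L = {a + t *\<^sub>R v | t. True})"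

definition generated_set :: "(real \<times> real) set \<Rightarrow> (real \<times> real) set \<Rightarrow> (real \<times> real \<times> real) set" where
  "generated_set L1 L2 =
     {(x, y, w) | x y w. \<exists>p q z. p \<in> L1 \<and> q \<in> L2 \<and> (x, y) = (1/2) *\<^sub>R (p + q)
                    \<and> 2 * z = dist p q \<and> (w = z \<or> w = - z)}"

definition planar :: "(real \<times> real \<times> real) set \<Rightarrow> bool" where
  "planar S \<longleftrightarrow> (\<exists>n c. n \<noteq> 0 \<and> S \<subseteq> {p. inner n p = c})"

definition half_plane :: "(real \<times> real \<times> real) set \<Rightarrow> bool" where
  "half_plane H \<longleftrightarrow> (\<exists>a u v. (\<forall>\<alpha> \<beta>. \<alpha> *\<^sub>R u + \<beta> *\<^sub>R v = 0 \<longrightarrow> \<alpha> = 0 \<and> \<beta> = 0)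
       \<and> H = {a + s *\<^sub>R u + t *\<^sub>R v | s t. t \<ge> 0})"

definition proj_xy :: "real \<times> real \<times> real \<Rightarrow> real \<times> real" where
  "proj_xy p = (fst p, fst (snd p))"

end

theory Submission
  imports Defs
begin



definition lin :: "real \<times> real \<Rightarrow> real \<times> real \<Rightarrow> (real \<times> real) set" where
  "lin a v = {a + t *\<^sub>R v | t. True}"

lemma norm_perp:
  fixes h u :: "real \<times> real"
  assumes "inner u u = 1" "inner h u = 0"
  shows "norm (h + t *\<^sub>R u) = sqrt (inner h h + t^2)"
proof -
  have "inner (h + t *\<^sub>R u) (h + t *\<^sub>R u) = inner h h + t^2"
    using assms by (simp add: inner_add_left inner_add_right inner_commute power2_eq_square)
  then show ?thesis by (simp add: norm_eq_sqrt_inner)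
qed

lemma core_gen:
  fixes c h u :: "real \<times> real"
  assumes u1: "inner u u = 1" and hu: "inner h u = 0"
  shows "generated_set (lin (c+h) u) (lin (c-h) u) = {(x,y,w) | x y w. (x,y) \<in> lin c u \<and> norm h \<le> \<bar>w\<bar>}"
proof (rule set_eqI, rule iffI)
  fix P assume "P \<in> generated_set (lin (c+h) u) (lin (c-h) u)"
  then obtain x y w p q z where P: "P = (x,y,w)" and p: "p \<in> lin (c+h) u" and q: "q \<in> lin (c-h) u"
    and m: "(x,y) = (1/2) *\<^sub>R (p+q)" and z: "2*z = dist p q" and w: "w = z \<or> w = -z"
    unfolding generated_set_def by blast
  obtain t s where pt: "p = c + h + t *\<^sub>R u" and qs: "q = c - h + s *\<^sub>R u" using p q unfolding lin_def by blast
  have "(x,y) = c + ((t+s)/2) *\<^sub>R u" using m pt qs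
    by (simp add: prod_eq_iff field_simps)
  hence mem: "(x,y) \<in> lin c u" unfolding lin_def by blast
  have "p - q = (2 *\<^sub>R h) + (t - s) *\<^sub>R u" unfolding pt qs by (simp add: prod_eq_iff algebra_simps)
  hence "dist p q = sqrt (inner (2 *\<^sub>R h) (2 *\<^sub>R h) + (t-s)^2)"
    using norm_perp[of u "2 *\<^sub>R h" "t-s"] u1 hu by (simp add: dist_norm)
  also have "\<dots> \<ge> sqrt (inner (2 *\<^sub>R h) (2 *\<^sub>R h))" by (simp)
  also have "sqrt (inner (2 *\<^sub>R h) (2 *\<^sub>R h)) = 2 * norm h" by (simp add: norm_eq_sqrt_inner real_sqrt_mult)
  finally have "norm h \<le> \<bar>w\<bar>" using z w by auto
  then show "P \<in> {(x,y,w) | x y w. (x,y) \<in> lin c u \<and> norm h \<le> \<bar>w\<bar>}" using P mem by blast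
next
  fix P assume "P \<in> {(x,y,w) | x y w. (x,y) \<in> lin c u \<and> norm h \<le> \<bar>w\<bar>}"
  then obtain x y w r where P: "P = (x,y,w)" and r: "(x,y) = c + r *\<^sub>R u" and hw: "norm h \<le> \<bar>w\<bar>"
    unfolding lin_def by blast
  define z where "z = \<bar>w\<bar>"
  define \<delta> where "\<delta> = sqrt (4*z^2 - 4*(norm h)^2)"
  have d2: "\<delta>^2 = 4*z^2 - 4*(norm h)^2" unfolding \<delta>_def
    using hw by (simp add: z_def) (metis abs_le_square_iff abs_norm_cancel)
  define p where "p = c + h + (r + \<delta>/2) *\<^sub>R u"
  define q where "q = c - h + (r - \<delta>/2) *\<^sub>R u"
  have pl: "p \<in> lin (c+h) u" unfolding lin_def p_def by blast
  have ql: "q \<in> lin (c-h) u" unfolding lin_def q_def by blast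
  have m: "(x,y) = (1/2) *\<^sub>R (p+q)" unfolding p_def q_def r
    by (simp add: prod_eq_iff field_simps)
  have "p - q = (2 *\<^sub>R h) + \<delta> *\<^sub>R u" unfolding p_def q_def by (simp add: prod_eq_iff field_simps)
  hence "dist p q = sqrt (inner (2 *\<^sub>R h) (2 *\<^sub>R h) + \<delta>^2)"
    using norm_perp[of u "2 *\<^sub>R h" "\<delta>"] u1 hu by (simp add: dist_norm)
  also have "\<dots> = sqrt (4 * z^2)" using d2 by (simp add: power2_norm_eq_inner[symmetric])
  also have "\<dots> = 2 * z" by (simp add: real_sqrt_mult z_def)
  finally have "2 * z = dist p q" by simp
  moreover have "w = z \<or> w = -z" unfolding z_def by auto
  ultimately show "P \<in> generated_set (lin (c+h) u) (lin (c-h) u)"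
    unfolding generated_set_def P using pl ql m by blast
qed


lemma perp2:
  fixes a b u :: "real \<times> real"
  assumes "inner a u = 0" "inner b u = 0" "u \<noteq> 0" "b \<noteq> 0"
  shows "a = (inner a b / inner b b) *\<^sub>R b"
proof -
  obtain a1 a2 where a: "a = (a1,a2)" by (cases a)
  obtain b1 b2 where b: "b = (b1,b2)" by (cases b)
  obtain u1 u2 where u: "u = (u1,u2)" by (cases u)
  have e1: "a1*u1 + a2*u2 = 0" "b1*u1+b2*u2 = 0" using assms(1,2) a b u by auto
  have det: "a1*b2 - a2*b1 = 0"
  proof -
    have "(a1*b2 - a2*b1) * u1 = 0" "(a1*b2 - a2*b1) * u2 = 0" using e1 by algebra+
    then show ?thesis using assms(3) u by (auto simp: zero_prod_def)
  qed
  have bb: "b1*b1+b2*b2 \<noteq> 0" using assms(4) b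
    by (auto simp: zero_prod_def)
  have "a1 = (a1*b1+a2*b2)/(b1*b1+b2*b2) * b1" "a2 = (a1*b1+a2*b2)/(b1*b1+b2*b2) * b2"
    using bb det by (auto simp: field_simps)
  then show ?thesis using a b by simp
qed

lemma image_lin: "(\<lambda>p. v + p) ` lin c u = lin (c + v) u"
  unfolding lin_def by (auto simp: algebra_simps image_iff)

lemma lin_shift: "lin (a + k *\<^sub>R u) u = lin a u"
proof (rule set_eqI)
  fix x
  have "(\<exists>t. x = a + k *\<^sub>R u + t *\<^sub>R u) \<longleftrightarrow> (\<exists>s. x = a + s *\<^sub>R u)"
  proof
    assume "\<exists>t. x = a + k *\<^sub>R u + t *\<^sub>R u"
    then obtain t where "x = a + k *\<^sub>R u + t *\<^sub>R u" by blast
    then have "x = a + (k+t) *\<^sub>R u" by (simp add: algebra_simps)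
    then show "\<exists>s. x = a + s *\<^sub>R u" by blast
  next
    assume "\<exists>s. x = a + s *\<^sub>R u"
    then obtain s where "x = a + s *\<^sub>R u" by blast
    then have "x = a + k *\<^sub>R u + (s-k) *\<^sub>R u" by (simp add: algebra_simps)
    then show "\<exists>t. x = a + k *\<^sub>R u + t *\<^sub>R u" by blast
  qed
  then show "x \<in> lin (a + k *\<^sub>R u) u \<longleftrightarrow> x \<in> lin a u" unfolding lin_def by simp
qed

lemma setdist_lin:
  fixes c h u :: "real \<times> real"
  assumes u1: "inner u u = 1" and hu: "inner h u = 0"
  shows "setdist (lin (c + \<mu> *\<^sub>R h) u) (lin c u) = \<bar>\<mu>\<bar> * norm h"
proof -
  have a: "c + \<mu> *\<^sub>R h \<in> lin (c + \<mu> *\<^sub>R h) u" unfolding lin_def by (rule CollectI, rule exI[of _ 0]) simp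
  have b: "c \<in> lin c u" unfolding lin_def by (rule CollectI, rule exI[of _ 0]) simp
  have hu': "inner (\<mu> *\<^sub>R h) u = 0" using hu by simp
  have "setdist (lin (c + \<mu> *\<^sub>R h) u) (lin c u) = dist (c + \<mu> *\<^sub>R h) c"
  proof (rule setdist_unique[OF a b])
    fix x y assume "x \<in> lin (c + \<mu> *\<^sub>R h) u \<and> y \<in> lin c u"
    then obtain t s where x: "x = c + \<mu> *\<^sub>R h + t *\<^sub>R u" and y: "y = c + s *\<^sub>R u"
      unfolding lin_def by blast
    have "x - y = \<mu> *\<^sub>R h + (t - s) *\<^sub>R u" unfolding x y by (simp add: algebra_simps)
    hence "dist x y = sqrt (inner (\<mu> *\<^sub>R h) (\<mu> *\<^sub>R h) + (t-s)^2)"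
      using norm_perp[OF u1 hu', of "t-s"] by (simp add: dist_norm)
    also have "\<dots> \<ge> sqrt (inner (\<mu> *\<^sub>R h) (\<mu> *\<^sub>R h))" by simp
    also have "sqrt (inner (\<mu> *\<^sub>R h) (\<mu> *\<^sub>R h)) = dist (c + \<mu> *\<^sub>R h) c"
      by (simp add: dist_norm norm_eq_sqrt_inner)
    finally show "dist (c + \<mu> *\<^sub>R h) c \<le> dist x y" .
  qed
  also have "\<dots> = \<bar>\<mu>\<bar> * norm h" by (simp add: dist_norm)
  finally show ?thesis .
qed

lemma translates:
  fixes c h u :: "real \<times> real"
  assumes u1: "inner u u = 1" and hu: "inner h u = 0" and h0: "h \<noteq> 0"
  shows "{L. \<exists>v. L = (\<lambda>p. v + p) ` lin c u \<and> setdist L (lin c u) = norm h}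
         = {lin (c+h) u, lin (c-h) u}"
proof (rule set_eqI, rule iffI)
  fix L assume "L \<in> {L. \<exists>v. L = (\<lambda>p. v + p) ` lin c u \<and> setdist L (lin c u) = norm h}"
  then obtain v where L: "L = lin (c + v) u" and sd: "setdist L (lin c u) = norm h"
    by (auto simp: image_lin)
  have u0: "u \<noteq> 0" using u1 by auto
  define \<mu> where "\<mu> = inner (v - inner v u *\<^sub>R u) h / inner h h"
  have "inner (v - inner v u *\<^sub>R u) u = 0" using u1 by (simp add: inner_diff_left)
  hence "v - inner v u *\<^sub>R u = \<mu> *\<^sub>R h" unfolding \<mu>_def using perp2[OF _ hu u0 h0] by blast
  hence "c + v = (c + \<mu> *\<^sub>R h) + inner v u *\<^sub>R u" by (simp add: algebra_simps)
  hence L2: "L = lin (c + \<mu> *\<^sub>R h) u" using L lin_shift by metis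
  have "\<bar>\<mu>\<bar> * norm h = norm h" using sd setdist_lin[OF u1 hu, of c \<mu>] L2 by simp
  hence "\<bar>\<mu>\<bar> = 1" using h0 by simp
  hence "\<mu> = 1 \<or> \<mu> = -1" by linarith
  then show "L \<in> {lin (c+h) u, lin (c-h) u}" using L2 by auto
next
  fix L assume "L \<in> {lin (c+h) u, lin (c-h) u}"
  then consider "L = lin (c + 1 *\<^sub>R h) u" | "L = lin (c + (-1) *\<^sub>R h) u" by auto
  then show "L \<in> {L. \<exists>v. L = (\<lambda>p. v + p) ` lin c u \<and> setdist L (lin c u) = norm h}"
  proof cases
    case 1
    then have "L = (\<lambda>p. h + p) ` lin c u \<and> setdist L (lin c u) = norm h"
      using setdist_lin[OF u1 hu, of c 1] image_lin[of h c u] by auto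
    then show ?thesis by blast
  next
    case 2
    then have "L = (\<lambda>p. (-h) + p) ` lin c u \<and> setdist L (lin c u) = norm h"
      using setdist_lin[OF u1 hu, of c "-1"] image_lin[of "-h" c u] by auto
    then show ?thesis by blast
  qed
qed

lemma lin_scale: "k \<noteq> 0 \<Longrightarrow> lin a (k *\<^sub>R v) = lin a v"
proof (rule set_eqI)
  fix x assume k: "k \<noteq> 0"
  have "(\<exists>t. x = a + t *\<^sub>R (k *\<^sub>R v)) \<longleftrightarrow> (\<exists>s. x = a + s *\<^sub>R v)"
  proof
    assume "\<exists>t. x = a + t *\<^sub>R (k *\<^sub>R v)"
    then obtain t where "x = a + t *\<^sub>R (k *\<^sub>R v)" by blast
    then have "x = a + (t*k) *\<^sub>R v" by simp
    then show "\<exists>s. x = a + s *\<^sub>R v" by blast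
  next
    assume "\<exists>s. x = a + s *\<^sub>R v"
    then obtain s where "x = a + s *\<^sub>R v" by blast
    then have "x = a + (s/k) *\<^sub>R (k *\<^sub>R v)" using k by simp
    then show "\<exists>t. x = a + t *\<^sub>R (k *\<^sub>R v)" by blast
  qed
  then show "x \<in> lin a (k *\<^sub>R v) \<longleftrightarrow> x \<in> lin a v" unfolding lin_def by simp
qed

lemma mem_gen:
  assumes "p \<in> L1" "q \<in> L2"
  shows "(fst ((1/2) *\<^sub>R (p+q)), snd ((1/2) *\<^sub>R (p+q)), dist p q / 2) \<in> generated_set L1 L2"
    and "(fst ((1/2) *\<^sub>R (p+q)), snd ((1/2) *\<^sub>R (p+q)), - (dist p q / 2)) \<in> generated_set L1 L2"
  unfolding generated_set_def
   apply (rule CollectI, rule exI, rule exI, rule exI, rule conjI[OF refl])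
   apply (rule exI[of _ p], rule exI[of _ q], rule exI[of _ "dist p q / 2"]) using assms apply (simp add: prod_eq_iff)
   apply (rule CollectI, rule exI, rule exI, rule exI, rule conjI[OF refl])
   apply (rule exI[of _ p], rule exI[of _ q], rule exI[of _ "dist p q / 2"]) using assms apply (simp add: prod_eq_iff)
  done

lemma reduce:
  assumes l1: "plane_line L1" and l2: "plane_line L2" and ne: "L1 \<noteq> L2"
    and pl: "planar (generated_set L1 L2)"
  shows "\<exists>c h u. inner u u = 1 \<and> inner h u = 0 \<and> h \<noteq> 0 \<and> L1 = lin (c+h) u \<and> L2 = lin (c-h) u"
proof -
  obtain a1 v1 where v1: "v1 \<noteq> 0" and L1: "L1 = lin a1 v1" using l1 unfolding plane_line_def lin_def by blast
  obtain a2 v2 where v2: "v2 \<noteq> 0" and L2: "L2 = lin a2 v2" using l2 unfolding plane_line_def lin_def by blast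
  obtain n c0 where n0: "n \<noteq> 0" and sub: "generated_set L1 L2 \<subseteq> {p. inner n p = c0}"
    using pl unfolding planar_def by blast
  obtain n1 n2 n3 where n: "n = (n1,n2,n3)" by (cases n) auto
  have key: "n1 * (fst p + fst q) + n2 * (snd p + snd q) = 2*c0 \<and> n3 * dist p q = 0"
    if "p \<in> L1" "q \<in> L2" for p q
  proof -
    define D where "D = dist p q"
    have "inner n (fst ((1/2) *\<^sub>R (p+q)), snd ((1/2) *\<^sub>R (p+q)), dist p q / 2) = c0"
         "inner n (fst ((1/2) *\<^sub>R (p+q)), snd ((1/2) *\<^sub>R (p+q)), - (dist p q / 2)) = c0"
      using mem_gen[OF that] sub by blast+
    then show ?thesis unfolding n D_def[symmetric] apply (simp add: algebra_simps) by (elim disjE; simp; linarith)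
  qed
  have inL1: "a1 + t *\<^sub>R v1 \<in> L1" for t unfolding L1 lin_def by blast
  have inL2: "a2 + t *\<^sub>R v2 \<in> L2" for t unfolding L2 lin_def by blast
  have "\<exists>q \<in> L2. q \<noteq> a1"
  proof (cases "a2 = a1")
    case True
    then have "a2 + 1 *\<^sub>R v2 \<noteq> a1" using v2 by simp
    then show ?thesis using inL2 by blast
  next
    case False then show ?thesis using inL2[of 0] by auto
  qed
  then obtain q0 where q0: "q0 \<in> L2" "q0 \<noteq> a1" by blast
  have "n3 = 0" using key[OF inL1[of 0] q0(1)] q0(2) by simp
  define n' where "n' = (n1, n2)"
  have n'0: "n' \<noteq> 0" using n0 \<open>n3 = 0\<close> unfolding n n'_def by (auto simp: zero_prod_def)
  have ip: "inner n' (p + q) = 2*c0" if "p \<in> L1" "q \<in> L2" for p q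
    using key[OF that] unfolding n'_def by (cases p, cases q) (simp add: algebra_simps)
  have "inner n' v1 = 0"
    using ip[OF inL1[of 1] inL2[of 0]] ip[OF inL1[of 0] inL2[of 0]] by (simp add: inner_add_right)
  have "inner n' v2 = 0"
    using ip[OF inL1[of 0] inL2[of 1]] ip[OF inL1[of 0] inL2[of 0]] by (simp add: inner_add_right)
  define u where "u = (1 / norm v1) *\<^sub>R v1"
  have u1: "inner u u = 1" unfolding u_def using v1
    by (simp add: power2_norm_eq_inner[symmetric] power2_eq_square)
  have u0: "u \<noteq> 0" using u1 by auto
  have v1u: "v1 = norm v1 *\<^sub>R u" unfolding u_def using v1 by simp
  have "inner u n' = 0" unfolding u_def using \<open>inner n' v1 = 0\<close> by (simp add: inner_commute)
  hence v2u: "v2 = (inner v2 u / inner u u) *\<^sub>R u"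
    using perp2[of v2 n' u] \<open>inner n' v2 = 0\<close> n'0 u0 by (simp add: inner_commute)
  hence "inner v2 u / inner u u \<noteq> 0" using v2 by (metis scaleR_zero_left)
  hence L2u: "L2 = lin a2 u" using L2 v2u lin_scale by metis
  have L1u: "L1 = lin a1 u" using L1 v1u lin_scale v1 by (metis norm_eq_zero)
  define e where "e = (a1 - a2) - inner (a1 - a2) u *\<^sub>R u"
  have eu: "inner e u = 0" unfolding e_def using u1 by (simp add: inner_diff_left)
  have "a1 = (a2 + e) + inner (a1 - a2) u *\<^sub>R u" unfolding e_def by simp
  hence L1e: "L1 = lin (a2 + e) u" using L1u lin_shift by metis
  define c where "c = a2 + (1/2) *\<^sub>R e"
  define h where "h = (1/2) *\<^sub>R e"
  have ch1: "c + h = a2 + e" unfolding c_def h_def by (simp add: prod_eq_iff)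
  have ch2: "c - h = a2" unfolding c_def h_def by simp
  have "h \<noteq> 0" using ne L1e L2u unfolding h_def by auto
  moreover have "inner h u = 0" unfolding h_def using eu by simp
  ultimately show ?thesis using u1 L1e L2u ch1 ch2 by metis
qed

definition gs :: "(real \<times> real) set \<Rightarrow> real \<Rightarrow> (real \<times> real \<times> real) set" where
  "gs P r = {(x,y,w) | x y w. (x,y) \<in> P \<and> r \<le> \<bar>w\<bar>}"

lemma hchar:
  fixes c u :: "real \<times> real" and r \<sigma> :: real
  assumes s: "\<sigma> = 1 \<or> \<sigma> = -1"
  shows "{(fst c, snd c, \<sigma>*r) + s *\<^sub>R (fst u, snd u, 0) + t *\<^sub>R (0, 0, \<sigma>) | s t. t \<ge> 0}
        = {(x,y,w) | x y w. (x,y) \<in> lin c u \<and> r \<le> \<sigma> * w}"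
proof (rule set_eqI, rule iffI)
  fix P assume "P \<in> {(fst c, snd c, \<sigma>*r) + s *\<^sub>R (fst u, snd u, 0) + t *\<^sub>R (0, 0, \<sigma>) | s t. t \<ge> 0}"
  then obtain s t where P: "P = (fst c, snd c, \<sigma>*r) + s *\<^sub>R (fst u, snd u, 0) + t *\<^sub>R (0, 0, \<sigma>)"
    and t: "t \<ge> 0" by blast
  have "(fst c + s * fst u, snd c + s * snd u) \<in> lin c u" unfolding lin_def
    by (rule CollectI, rule exI[of _ s]) (simp add: prod_eq_iff)
  moreover have "r \<le> \<sigma> * (\<sigma>*r + t*\<sigma>)" using s t by auto
  ultimately show "P \<in> {(x,y,w) | x y w. (x,y) \<in> lin c u \<and> r \<le> \<sigma> * w}" unfolding P by simp
next
  fix P assume "P \<in> {(x,y,w) | x y w. (x,y) \<in> lin c u \<and> r \<le> \<sigma> * w}"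
  then obtain x y w s where P: "P = (x,y,w)" and xy: "(x,y) = c + s *\<^sub>R u" and w: "r \<le> \<sigma> * w"
    unfolding lin_def by blast
  have "P = (fst c, snd c, \<sigma>*r) + s *\<^sub>R (fst u, snd u, 0) + (\<sigma>*w - r) *\<^sub>R (0, 0, \<sigma>)"
    using xy s unfolding P by (auto simp: prod_eq_iff algebra_simps)
  moreover have "\<sigma>*w - r \<ge> 0" using w by simp
  ultimately show "P \<in> {(fst c, snd c, \<sigma>*r) + s *\<^sub>R (fst u, snd u, 0) + t *\<^sub>R (0, 0, \<sigma>) | s t. t \<ge> 0}"
    by blast
qed

lemma hp:
  fixes c u :: "real \<times> real" and r \<sigma> :: real
  assumes s: "\<sigma> = 1 \<or> \<sigma> = -1" and u: "u \<noteq> 0"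
  shows "half_plane {(x,y,w) | x y w. (x,y) \<in> lin c u \<and> r \<le> \<sigma> * w}"
  unfolding half_plane_def hchar[OF s, symmetric]
proof (intro exI conjI allI impI)
  fix \<alpha> \<beta> :: real assume h: "\<alpha> *\<^sub>R (fst u, snd u, 0) + \<beta> *\<^sub>R (0, 0, \<sigma>) = (0::real\<times>real\<times>real)"
  then have "\<beta> = 0" using s by (auto simp: zero_prod_def)
  with h have "\<alpha> *\<^sub>R u = 0" by (auto simp: zero_prod_def prod_eq_iff)
  then show "\<alpha> = 0" using u by simp
  with h \<open>\<beta> = 0\<close> show "\<beta> = 0" by simp
qed (rule refl)

lemma halves:
  fixes c u :: "real \<times> real" and r :: real
  assumes u: "u \<noteq> 0" and r: "r > 0"
  obtains H1 H2 where "half_plane H1" "half_plane H2" "H1 \<inter> H2 = {}" "gs (lin c u) r = H1 \<union> H2"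
           "setdist H1 H2 = 2 * r"
proof -
  define H1 where "H1 = {(x,y,w) | x y w. (x,y) \<in> lin c u \<and> r \<le> 1 * w}"
  define H2 where "H2 = {(x,y,w) | x y w. (x,y) \<in> lin c u \<and> r \<le> (-1) * w}"
  have A: "half_plane H1" unfolding H1_def by (rule hp[OF _ u]) simp
  have B: "half_plane H2" unfolding H2_def by (rule hp[OF _ u]) simp
  have C: "H1 \<inter> H2 = {}" unfolding H1_def H2_def using r by auto
  have D: "gs (lin c u) r = H1 \<union> H2" unfolding H1_def H2_def gs_def by auto
  have E: "setdist H1 H2 = 2 * r"
  proof -
    have c: "c \<in> lin c u" unfolding lin_def by (rule CollectI, rule exI[of _ 0]) simp
    have a: "(fst c, snd c, r) \<in> H1" unfolding H1_def using c by simp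
    have b: "(fst c, snd c, -r) \<in> H2" unfolding H2_def using c by simp
    have "setdist H1 H2 = dist (fst c, snd c, r) (fst c, snd c, -r)"
    proof (rule setdist_unique[OF a b])
      fix x y assume xy: "x \<in> H1 \<and> y \<in> H2"
      have "dist (fst c, snd c, r) (fst c, snd c, -r) = 2 * r" using r by (simp add: dist_Pair_Pair dist_real_def real_sqrt_mult)
      also have "2 * r \<le> dist (snd (snd x)) (snd (snd y))"
        using xy unfolding H1_def H2_def by (auto simp: dist_real_def)
      also have "\<dots> \<le> dist (snd x) (snd y)" by (rule dist_snd_le)
      also have "\<dots> \<le> dist x y" by (rule dist_snd_le)
      finally show "dist (fst c, snd c, r) (fst c, snd c, -r) \<le> dist x y" .
    qed
    also have "\<dots> = 2 * r" using r by (simp add: dist_Pair_Pair dist_real_def real_sqrt_mult)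
    finally show ?thesis .
  qed
  show thesis by (rule that[OF A B C D E])
qed

lemma proj_gs: "proj_xy ` gs P r = P"
proof (rule set_eqI, rule iffI)
  fix p assume "p \<in> proj_xy ` gs P r"
  then show "p \<in> P" unfolding gs_def proj_xy_def by auto
next
  fix p assume p: "p \<in> P"
  have "(fst p, snd p, \<bar>r\<bar>) \<in> gs P r" unfolding gs_def using p by simp
  moreover have "proj_xy (fst p, snd p, \<bar>r\<bar>) = p" unfolding proj_xy_def by simp
  ultimately show "p \<in> proj_xy ` gs P r" by force
qed

lemma gs_inj:
  assumes "P \<noteq> {}" "P' \<noteq> {}" "r \<ge> 0" "r' \<ge> 0" "gs P r = gs P' r'"
  shows "P = P' \<and> r = r'"
proof
  show "P = P'" using proj_gs[of P r] proj_gs[of P' r'] assms(5) by simp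
  obtain p where p: "p \<in> P" using assms(1) by blast
  obtain p' where p': "p' \<in> P'" using assms(2) by blast
  have "(fst p, snd p, r) \<in> gs P r" unfolding gs_def using p assms(3) by simp
  hence "(fst p, snd p, r) \<in> gs P' r'" using assms(5) by simp
  hence "r' \<le> r" using assms(3) unfolding gs_def by auto
  moreover have "(fst p', snd p', r') \<in> gs P' r'" unfolding gs_def using p' assms(4) by simp
  hence "(fst p', snd p', r') \<in> gs P r" using assms(5) by simp
  hence "r \<le> r'" using assms(4) unfolding gs_def by auto
  ultimately show "r = r'" by simp
qed

lemma set_ex_conj: "{L. (\<exists>v. L = f v) \<and> P L} = {L. \<exists>v. L = f v \<and> P L}"
  by blast

lemma gen_structure:
  assumes "plane_line L1" and "plane_line L2" and "L1 \<noteq> L2"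
    and "planar (generated_set L1 L2)"
  obtains c u r where "u \<noteq> 0" "r > 0" "generated_set L1 L2 = gs (lin c u) r"
     "{L1, L2} = {L. (\<exists>v. L = (\<lambda>p. v + p) ` lin c u) \<and> setdist L (lin c u) = r}"
proof -
  obtain c h u where u1: "inner u u = 1" and hu: "inner h u = 0" and h0: "h \<noteq> 0"
    and L1: "L1 = lin (c+h) u" and L2: "L2 = lin (c-h) u" using reduce[OF assms] by blast
  have A: "generated_set L1 L2 = gs (lin c u) (norm h)"
    unfolding L1 L2 core_gen[OF u1 hu] gs_def by simp
  have B: "{L1, L2} = {L. (\<exists>v. L = (\<lambda>p. v + p) ` lin c u) \<and> setdist L (lin c u) = norm h}"
    unfolding set_ex_conj translates[OF u1 hu h0] L1 L2 ..
  have C: "u \<noteq> 0" using u1 by auto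
  have D: "norm h > 0" using h0 by simp
  show thesis by (rule that[OF C D A B])
qed

lemma lin_ne: "lin c u \<noteq> {}"
  unfolding lin_def by blast

theorem corollary3p9:
  fixes L1 L2 :: "(real \<times> real) set"
  assumes "plane_line L1" and "plane_line L2" and "L1 \<noteq> L2"
    and "planar (generated_set L1 L2)"
  shows "(\<forall>M1 M2. plane_line M1 \<and> plane_line M2 \<and> M1 \<noteq> M2
                 \<and> generated_set M1 M2 = generated_set L1 L2 \<longrightarrow> {M1, M2} = {L1, L2})
       \<and> (\<exists>H1 H2. half_plane H1 \<and> half_plane H2 \<and> H1 \<inter> H2 = {}
                 \<and> generated_set L1 L2 = H1 \<union> H2
                 \<and> plane_line (proj_xy ` generated_set L1 L2)
                 \<and> {L1, L2} = {L. (\<exists>v. L = (\<lambda>p. v + p) ` (proj_xy ` generated_set L1 L2))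
                                 \<and> setdist L (proj_xy ` generated_set L1 L2) = setdist H1 H2 / 2})"
proof -
  obtain c u r where u: "u \<noteq> 0" and r: "r > 0" and S: "generated_set L1 L2 = gs (lin c u) r"
    and T: "{L1, L2} = {L. (\<exists>v. L = (\<lambda>p. v + p) ` lin c u) \<and> setdist L (lin c u) = r}"
    by (rule gen_structure[OF assms])
  have projS: "proj_xy ` generated_set L1 L2 = lin c u" unfolding S proj_gs ..
  have part1: "{M1, M2} = {L1, L2}"
    if m: "plane_line M1" "plane_line M2" "M1 \<noteq> M2" "generated_set M1 M2 = generated_set L1 L2" for M1 M2
  proof -
    have "planar (generated_set M1 M2)" using m(4) assms(4) by simp
    then obtain c' u' r' where r': "r' > 0" and S': "generated_set M1 M2 = gs (lin c' u') r'"
      and T': "{M1, M2} = {L. (\<exists>v. L = (\<lambda>p. v + p) ` lin c' u') \<and> setdist L (lin c' u') = r'}"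
      by (rule gen_structure[OF m(1-3)])
    have X: "gs (lin c' u') r' = gs (lin c u) r"
    proof -
      have "gs (lin c' u') r' = generated_set M1 M2" by (rule S'[symmetric])
      also have "\<dots> = generated_set L1 L2" by (rule m(4))
      also have "\<dots> = gs (lin c u) r" by (rule S)
      finally show ?thesis .
    qed
    have "lin c' u' = lin c u \<and> r' = r"
      by (rule gs_inj[OF lin_ne lin_ne less_imp_le[OF r'] less_imp_le[OF r] X])
    then show ?thesis using T T' by simp
  qed
  obtain H1 H2 where H: "half_plane H1" "half_plane H2" "H1 \<inter> H2 = {}" "gs (lin c u) r = H1 \<union> H2"
    "setdist H1 H2 = 2 * r" by (rule halves[OF u r])
  have pl: "plane_line (lin c u)" unfolding plane_line_def lin_def using u by blast
  have hr: "setdist H1 H2 / 2 = r" using H(5) by simp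
  have e: "{L. (\<exists>v. L = (\<lambda>p. v + p) ` (proj_xy ` generated_set L1 L2))
                                 \<and> setdist L (proj_xy ` generated_set L1 L2) = setdist H1 H2 / 2}
         = {L1, L2}" unfolding projS hr T ..
  have A5: "generated_set L1 L2 = H1 \<union> H2" using S H(4) by simp
  have A6: "plane_line (proj_xy ` generated_set L1 L2)" using pl projS by simp
  have part2: "\<exists>H1 H2. half_plane H1 \<and> half_plane H2 \<and> H1 \<inter> H2 = {}
                 \<and> generated_set L1 L2 = H1 \<union> H2
                 \<and> plane_line (proj_xy ` generated_set L1 L2)
                 \<and> {L1, L2} = {L. (\<exists>v. L = (\<lambda>p. v + p) ` (proj_xy ` generated_set L1 L2))
                                 \<and> setdist L (proj_xy ` generated_set L1 L2) = setdist H1 H2 / 2}"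
    apply (rule exI[of _ H1], rule exI[of _ H2])
    by (intro conjI, rule H(1), rule H(2), rule H(3), rule A5, rule A6, rule e[symmetric])
  show ?thesis
    apply (rule conjI)
     apply (intro allI impI)
     apply (elim conjE)
     apply (rule part1; assumption)
    apply (rule part2)
    done
qed

end
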